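(* Let $\mu\in(0,1/2]$, $d=\sqrt{1-3\mu+3\mu^2}$, $\lambda_1=\tfrac32(1-d)$, $\lambda_2=\tfrac32(1+d)$, and consider the system $\ddot x-2\dot y=\Omega_x$, $\ddot y+2\dot x=\Omega_y$, $\ddot z=\Omega_z$ with $\Omega=\tfrac12(\lambda_2x^2+\lambda_1y^2-z^2)+\frac{1}{\sqrt{x^2+y^2+z^2}}$. Then all equilibrium points lie in the plane $z=0$, and there are exactly four of them: $$L_1=(\lambda_2^{-1/3},0,0),\ L_2=(-\lambda_2^{-1/3},0,0),\ L_3=(0,\lambda_1^{-1/3},0),\ L_4=(0,-\lambda_1^{-1/3},0).$$
   Context: Equilibrium points are the critical points of $\Omega$ on $\mathbb{R}^3\setminus\{0\}$ (with zero velocity). *)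

theory Defs
  imports "HOL-Analysis.Analysis"
begin

definition Omega :: "real \<Rightarrow> real \<Rightarrow> real^3 \<Rightarrow> real" where
  "Omega lam1 lam2 p =
     (lam2 * (p$1)^2 + lam1 * (p$2)^2 - (p$3)^2) / 2
     + 1 / sqrt ((p$1)^2 + (p$2)^2 + (p$3)^2)"

definition equilibrium :: "real \<Rightarrow> real \<Rightarrow> real^3 \<Rightarrow> bool" where
  "equilibrium lam1 lam2 p \<longleftrightarrow>
     p \<noteq> 0 \<and> (Omega lam1 lam2 has_derivative (\<lambda>h. 0)) (at p)"

end

theory Submission imports Defs begin
lemma vecnth: "((\<lambda>x. x$i) has_derivative (\<lambda>h. h$i)) F"
  by (rule bounded_linear_imp_has_derivative[OF bounded_linear_vec_nth])

lemma Omega_deriv: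
  assumes "p \<noteq> 0"
  shows "(Omega l1 l2 has_derivative (\<lambda>h. (l2*(p$1) - (p$1)/sqrt((p$1)^2+(p$2)^2+(p$3)^2)^3) * h$1
     + (l1*(p$2) - (p$2)/sqrt((p$1)^2+(p$2)^2+(p$3)^2)^3) * h$2
     + (-(p$3) - (p$3)/sqrt((p$1)^2+(p$2)^2+(p$3)^2)^3) * h$3)) (at p)"
proof -
  have N: "(p$1)^2+(p$2)^2+(p$3)^2 > 0"
  proof (rule ccontr)
    assume "\<not> ?thesis"
    hence "p$1 = 0 \<and> p$2 = 0 \<and> p$3 = 0" by (smt (verit) zero_le_power2 power2_eq_square not_sum_power2_lt_zero sum_power2_eq_zero_iff)
    hence "p = 0" by (simp add: vec_eq_iff forall_3)
    thus False using assms by simp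
  qed
  have A: "((\<lambda>x. (x$1)^2+(x$2)^2+(x$3)^2) has_derivative (\<lambda>h. 2*(p$1)*h$1 + 2*(p$2)*h$2 + 2*(p$3)*h$3)) (at p)"
    apply (rule has_derivative_eq_rhs)
     apply (rule derivative_intros vecnth)+
    apply (simp add: fun_eq_iff)
    done
  have B: "((\<lambda>x. sqrt ((x$1)^2+(x$2)^2+(x$3)^2)) has_derivative (\<lambda>h. (2*(p$1)*h$1 + 2*(p$2)*h$2 + 2*(p$3)*h$3) * (inverse (sqrt ((p$1)^2+(p$2)^2+(p$3)^2)) / 2))) (at p)"
    by (rule has_derivative_real_sqrt[OF N A])
  have C: "((\<lambda>x. (l2 * (x$1)^2 + l1 * (x$2)^2 - (x$3)^2) / 2) has_derivative (\<lambda>h. l2*(p$1)*h$1 + l1*(p$2)*h$2 - (p$3)*h$3)) (at p)"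
    apply (rule has_derivative_eq_rhs)
     apply (rule derivative_intros vecnth)+
    apply (simp_all add: fun_eq_iff field_simps)
    done
  have sq: "sqrt ((p$1)^2+(p$2)^2+(p$3)^2) > 0" using N by simp
  have sq0: "sqrt ((p$1)^2+(p$2)^2+(p$3)^2) \<noteq> 0" using sq by simp
  note E = has_derivative_divide[OF has_derivative_const B sq0, of 1]
  show ?thesis
    unfolding Omega_def [abs_def]
    apply (rule has_derivative_eq_rhs)
     apply (rule has_derivative_add[OF C E])
    apply (rule ext)
    subgoal for h
    proof -
      define S where "S = sqrt ((p$1)^2+(p$2)^2+(p$3)^2)"
      have S2: "(p$1)^2+(p$2)^2+(p$3)^2 = S*S" unfolding S_def using N by simp
      have Sp: "S > 0" unfolding S_def using sq .
      show ?thesis unfolding S_def[symmetric] S2 using Sp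
        by (simp add: field_simps power3_eq_cube)
    qed
    done
qed

lemma cube_root:
  fixes c :: real assumes "c > 0"
  shows "c powr (-1/3) > 0" "(c powr (-1/3))^3 = 1/c"
proof -
  show "c powr (-1/3) > 0" using assms by simp
  have "(c powr (-1/3))^3 = c powr (of_nat 3 * (-1/3))" using assms by (simp add: powr_power)
  also have "\<dots> = 1/c" using assms by (simp add: powr_minus_divide)
  finally show "(c powr (-1/3))^3 = 1/c" .
qed

lemma cube_root_unique:
  fixes c t :: real assumes "c > 0" "t \<ge> 0" "t^3 = 1/c"
  shows "t = c powr (-1/3)"
  using cube_root[OF assms(1)] assms
  by (intro power_eq_imp_eq_base[of t 3]) auto

lemma equil_iff:
  fixes p :: "real^3"
  shows "equilibrium l1 l2 p \<longleftrightarrow> p \<noteq> 0 \<and>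
     l2*(p$1) - (p$1)/sqrt((p$1)^2+(p$2)^2+(p$3)^2)^3 = 0 \<and>
     l1*(p$2) - (p$2)/sqrt((p$1)^2+(p$2)^2+(p$3)^2)^3 = 0 \<and>
     -(p$3) - (p$3)/sqrt((p$1)^2+(p$2)^2+(p$3)^2)^3 = 0"
proof
  assume e: "equilibrium l1 l2 p"
  hence p0: "p \<noteq> 0" and D0: "(Omega l1 l2 has_derivative (\<lambda>h. 0)) (at p)"
    unfolding equilibrium_def by auto
  have F: "(\<lambda>h::real^3. (l2*(p$1) - (p$1)/sqrt((p$1)^2+(p$2)^2+(p$3)^2)^3) * h$1
     + (l1*(p$2) - (p$2)/sqrt((p$1)^2+(p$2)^2+(p$3)^2)^3) * h$2
     + (-(p$3) - (p$3)/sqrt((p$1)^2+(p$2)^2+(p$3)^2)^3) * h$3) = (\<lambda>h::real^3. 0)"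
    by (rule has_derivative_unique[OF Omega_deriv[OF p0] D0])
  note 1 = fun_cong[OF F, of "vector [1,0,0]", simplified]
  note 2 = fun_cong[OF F, of "vector [0,1,0]", simplified]
  note 3 = fun_cong[OF F, of "vector [0,0,1]", simplified]
  show "p \<noteq> 0 \<and>
     l2*(p$1) - (p$1)/sqrt((p$1)^2+(p$2)^2+(p$3)^2)^3 = 0 \<and>
     l1*(p$2) - (p$2)/sqrt((p$1)^2+(p$2)^2+(p$3)^2)^3 = 0 \<and>
     -(p$3) - (p$3)/sqrt((p$1)^2+(p$2)^2+(p$3)^2)^3 = 0"
    using p0 1 2 3 by simp
next
  assume H: "p \<noteq> 0 \<and>
     l2*(p$1) - (p$1)/sqrt((p$1)^2+(p$2)^2+(p$3)^2)^3 = 0 \<and>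
     l1*(p$2) - (p$2)/sqrt((p$1)^2+(p$2)^2+(p$3)^2)^3 = 0 \<and>
     -(p$3) - (p$3)/sqrt((p$1)^2+(p$2)^2+(p$3)^2)^3 = 0"
  show "equilibrium l1 l2 p"
    unfolding equilibrium_def
    using H Omega_deriv[of p l1 l2] by simp
qed

lemma equil_set:
  fixes l1 l2 :: real
  assumes l1: "l1 > 0" and l2: "l2 > 0" and ne: "l1 \<noteq> l2"
  shows "{p. equilibrium l1 l2 p} =
        {vector [l2 powr (-1/3), 0, 0], vector [- (l2 powr (-1/3)), 0, 0],
         vector [0, l1 powr (-1/3), 0], vector [0, - (l1 powr (-1/3)), 0]}"
    (is "_ = ?S")
proof (intro set_eqI iffI)
  fix p :: "real^3"
  assume "p \<in> {p. equilibrium l1 l2 p}"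
  hence E: "equilibrium l1 l2 p" by simp
  define x where "x = p$1"
  define y where "y = p$2"
  define z where "z = p$3"
  define r where "r = sqrt (x^2+y^2+z^2)"
  have p0: "p \<noteq> 0" and e1: "l2*x - x/r^3 = 0" and e2: "l1*y - y/r^3 = 0" and e3: "-z - z/r^3 = 0"
    using E unfolding equil_iff x_def y_def z_def r_def by auto
  have pv: "p = vector [x,y,z]" by (simp add: vec_eq_iff forall_3 vector_3 x_def y_def z_def)
  have "r \<ge> 0" unfolding r_def by simp
  have z0: "z = 0"
  proof -
    have "z * (1 + 1/r^3) = 0" using e3 by (simp add: algebra_simps)
    moreover have "1 + 1/r^3 > 0" using \<open>r \<ge> 0\<close> by (simp add: add_pos_nonneg)
    ultimately show ?thesis by simp
  qed
  show "p \<in> ?S"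
  proof (cases "x = 0")
    case False
    have "x * (l2 - 1/r^3) = 0" using e1 by (simp add: algebra_simps)
    hence k2: "l2 = 1/r^3" using False by simp
    have y0: "y = 0"
    proof (rule ccontr)
      assume "y \<noteq> 0"
      moreover have "y * (l1 - 1/r^3) = 0" using e2 by (simp add: algebra_simps)
      ultimately have "l1 = 1/r^3" by simp
      thus False using k2 ne by simp
    qed
    have rx: "r = \<bar>x\<bar>" unfolding r_def using y0 z0 by simp
    have "\<bar>x\<bar>^3 = 1/l2" using k2 rx by simp
    hence "\<bar>x\<bar> = l2 powr (-1/3)" by (intro cube_root_unique l2) auto
    hence "x = l2 powr (-1/3) \<or> x = - (l2 powr (-1/3))" by linarith
    thus ?thesis using pv y0 z0 by auto
  next
    case True
    have "y \<noteq> 0" using p0 pv True z0 by (auto simp: vec_eq_iff forall_3 vector_3)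
    have "y * (l1 - 1/r^3) = 0" using e2 by (simp add: algebra_simps)
    hence k1: "l1 = 1/r^3" using \<open>y \<noteq> 0\<close> by simp
    have ry: "r = \<bar>y\<bar>" unfolding r_def using True z0 by simp
    have "\<bar>y\<bar>^3 = 1/l1" using k1 ry by simp
    hence "\<bar>y\<bar> = l1 powr (-1/3)" by (intro cube_root_unique l1) auto
    hence "y = l1 powr (-1/3) \<or> y = - (l1 powr (-1/3))" by linarith
    thus ?thesis using pv True z0 by auto
  qed
next
  fix p :: "real^3"
  assume "p \<in> ?S"
  moreover
  have A: "equilibrium l1 l2 (vector [t, 0, 0])" if "\<bar>t\<bar> = l2 powr (-1/3)" for t
  proof -
    have t3: "\<bar>t\<bar>^3 = 1/l2" "\<bar>t\<bar> > 0" using cube_root[OF l2] that by auto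
    have s: "sqrt (t^2) = \<bar>t\<bar>" by simp
    have "t/\<bar>t\<bar>^3 = l2 * t" using t3 by (simp add: field_simps)
    moreover have "vector [t, 0, 0] \<noteq> (0::real^3)"
    proof
      assume "vector [t, 0, 0] = (0::real^3)"
      hence "(vector [t, 0, 0]::real^3) $ 1 = 0" by simp
      thus False using t3 by (simp add: vector_3)
    qed
    ultimately show ?thesis unfolding equil_iff using t3 by (simp add: vector_3)
  qed
  moreover
  have B: "equilibrium l1 l2 (vector [0, t, 0])" if "\<bar>t\<bar> = l1 powr (-1/3)" for t
  proof -
    have t3: "\<bar>t\<bar>^3 = 1/l1" "\<bar>t\<bar> > 0" using cube_root[OF l1] that by auto
    have "t/\<bar>t\<bar>^3 = l1 * t" using t3 by (simp add: field_simps)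
    moreover have "vector [0, t, 0] \<noteq> (0::real^3)"
    proof
      assume "vector [0, t, 0] = (0::real^3)"
      hence "(vector [0, t, 0]::real^3) $ 2 = 0" by simp
      thus False using t3 by (simp add: vector_3)
    qed
    ultimately show ?thesis unfolding equil_iff using t3 by (simp add: vector_3)
  qed
  ultimately show "p \<in> {p. equilibrium l1 l2 p}"
    using cube_root(1)[OF l1] cube_root(1)[OF l2] by (elim insertE) auto
qed

theorem mainTheorem3:
  fixes \<mu> d lam1 lam2 :: real
  assumes "0 < \<mu>" and "\<mu> \<le> 1/2"
    and "d = sqrt (1 - 3*\<mu> + 3*\<mu>^2)"
    and "lam1 = 3/2 * (1 - d)" and "lam2 = 3/2 * (1 + d)"
  shows "(\<forall>p. equilibrium lam1 lam2 p \<longrightarrow> p$3 = 0)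
    \<and> {p. equilibrium lam1 lam2 p} =
        {vector [lam2 powr (-1/3), 0, 0], vector [- (lam2 powr (-1/3)), 0, 0],
         vector [0, lam1 powr (-1/3), 0], vector [0, - (lam1 powr (-1/3)), 0]}
    \<and> card {p. equilibrium lam1 lam2 p} = 4"
proof -
  have q0: "1 - 3*\<mu> + 3*\<mu>^2 > 0"
  proof -
    have "1 - 3*\<mu> + 3*\<mu>^2 = 3*(\<mu> - 1/2)^2 + 1/4" by (simp add: power2_eq_square algebra_simps)
    moreover have "(\<mu> - 1/2)^2 \<ge> 0" by simp
    ultimately show ?thesis by linarith
  qed
  have q1: "1 - 3*\<mu> + 3*\<mu>^2 < 1"
  proof -
    have "\<mu> * (1 - \<mu>) > 0" using assms(1,2) by simp
    thus ?thesis by (simp add: power2_eq_square algebra_simps)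
  qed
  have d0: "d > 0" using q0 assms(3) by simp
  have d1: "d < 1" using q1 q0 assms(3) by simp
  have l1: "lam1 > 0" using d1 assms(4) by simp
  have l2: "lam2 > 0" using d0 assms(5) by simp
  have ne: "lam1 \<noteq> lam2" using d0 assms(4,5) by simp
  note S = equil_set[OF l1 l2 ne]
  define a where "a = lam2 powr (-1/3)"
  define b where "b = lam1 powr (-1/3)"
  have a0: "a > 0" and b0: "b > 0" unfolding a_def b_def using cube_root(1) l1 l2 by auto
  have c: "card {vector [a, 0, 0], vector [- a, 0, 0], vector [0, b, 0], vector [0, - b, 0] :: real^3} = 4"
    using a0 b0 by (simp add: vec_eq_iff forall_3 vector_3)
  have z: "\<forall>p. equilibrium lam1 lam2 p \<longrightarrow> p$3 = 0"
  proof (intro allI impI)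
    fix p assume "equilibrium lam1 lam2 p"
    hence "p \<in> {p. equilibrium lam1 lam2 p}" by simp
    thus "p$3 = 0" unfolding S by (auto simp: vector_3)
  qed
  show ?thesis using z S c unfolding a_def b_def by simp
qed
end
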